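(* Let $(E,\rho)$ be a weighted space and let $A\subset C_b(E)$ be a subalgebra (with respect to pointwise multiplication) that contains the constant function $1_E$ and separates the points of $E$. Then $A$ is dense in $\mathscr{B}^\rho(E)$ with respect to $\|\cdot\|_\rho$.
   Context: A weighted space is a pair $(E,\rho)$ where $E$ is a completely regular Hausdorff topological space and $\rho:E\to(0,\infty)$ is an admissible weight function, meaning that for every $R\ge 0$ the sublevel set $K_R:=\{x\in E:\rho(x)\le R\}$ is compact. For $f:E\to\mathbb{R}$ put $\|f\|_\rho:=\sup_{x\in E}|f(x)|/\rho(x)$; $\mathscr{B}^\rho(E)$ denotes the closure of $C_b(E)$ (bounded continuous real functions on $E$) with respect to $\|\cdot\|_\rho$ inside the Banach space $\{f:E\to\mathbb{R}:\|f\|_\rho<\infty\}$. *)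

theory Defs
  imports "HOL-Analysis.Analysis"
begin

definition admissible_weight :: "'a topology \<Rightarrow> ('a \<Rightarrow> real) \<Rightarrow> bool" where
  "admissible_weight X \<rho> \<longleftrightarrow>
     (\<forall>x\<in>topspace X. \<rho> x > 0) \<and>
     (\<forall>R\<ge>0. compactin X {x \<in> topspace X. \<rho> x \<le> R})"

definition weighted_space :: "'a topology \<Rightarrow> ('a \<Rightarrow> real) \<Rightarrow> bool" where
  "weighted_space X \<rho> \<longleftrightarrow>
     completely_regular_space X \<and> Hausdorff_space X \<and> admissible_weight X \<rho>"

definition wbounded :: "'a topology \<Rightarrow> ('a \<Rightarrow> real) \<Rightarrow> ('a \<Rightarrow> real) \<Rightarrow> bool" where
  "wbounded X \<rho> f \<longleftrightarrow> bdd_above ((\<lambda>x. \<bar>f x\<bar> / \<rho> x) ` topspace X)"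

text \<open>Weighted sup norm (the 0 only matters for the empty space, all values are nonnegative).\<close>
definition wnorm :: "'a topology \<Rightarrow> ('a \<Rightarrow> real) \<Rightarrow> ('a \<Rightarrow> real) \<Rightarrow> real" where
  "wnorm X \<rho> f = Sup (insert 0 ((\<lambda>x. \<bar>f x\<bar> / \<rho> x) ` topspace X))"

definition Cb :: "'a topology \<Rightarrow> ('a \<Rightarrow> real) set" where
  "Cb X = {f. continuous_map X euclideanreal f \<and> bounded (f ` topspace X)}"

definition B_rho :: "'a topology \<Rightarrow> ('a \<Rightarrow> real) \<Rightarrow> ('a \<Rightarrow> real) set" where
  "B_rho X \<rho> = {f. wbounded X \<rho> f \<and>
      (\<forall>\<epsilon>>0. \<exists>g\<in>Cb X. wbounded X \<rho> (\<lambda>x. f x - g x) \<and> wnorm X \<rho> (\<lambda>x. f x - g x) < \<epsilon>)}"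

end

theory Submission
  imports Defs
begin

datatype 'i pt = PT (unpt: "'i \<Rightarrow> real")

instantiation pt :: (type) topological_space
begin
definition open_pt_def: "open U \<longleftrightarrow> open (PT -` U)"
instance
proof
  show "open (UNIV :: 'a pt set)" by (simp add: open_pt_def)
  show "open S \<Longrightarrow> open T \<Longrightarrow> open (S \<inter> T)" for S T :: "'a pt set"
    by (simp add: open_pt_def open_Int vimage_Int)
  show "\<forall>S\<in>K. open S \<Longrightarrow> open (\<Union>K)" for K :: "'a pt set set"
    unfolding open_pt_def vimage_Union by (intro open_UN) auto
qed
end

lemma PT_unpt_vimage: "PT -` (unpt -` U) = U" by auto

lemma open_unpt_vimage: "open U \<Longrightarrow> open (unpt -` U)"
  by (simp add: open_pt_def PT_unpt_vimage)

instance pt :: (type) t2_space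
proof
  fix x y :: "'a pt"
  assume "x \<noteq> y"
  then have "unpt x \<noteq> unpt y" by (cases x; cases y) simp
  then obtain i where i: "unpt x i \<noteq> unpt y i" by auto
  obtain U0 V0 where UV0: "open U0" "open V0" "unpt x i \<in> U0" "unpt y i \<in> V0" "U0 \<inter> V0 = {}"
    using hausdorff[OF i] by blast
  define U where "U = (\<lambda>f::'a\<Rightarrow>real. f i) -` U0"
  define V where "V = (\<lambda>f::'a\<Rightarrow>real. f i) -` V0"
  have "open U" unfolding U_def by (rule open_vimage[OF UV0(1) continuous_on_product_coordinates])
  have "open V" unfolding V_def by (rule open_vimage[OF UV0(2) continuous_on_product_coordinates])
  have "unpt x \<in> U" by (simp add: U_def UV0(3))
  have "unpt y \<in> V" by (simp add: V_def UV0(4))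
  have "U \<inter> V = {}" unfolding U_def V_def vimage_Int[symmetric] UV0(5) by simp
  have "open (unpt -` U)" by (rule open_unpt_vimage[OF \<open>open U\<close>])
  moreover have "open (unpt -` V)" by (rule open_unpt_vimage[OF \<open>open V\<close>])
  moreover have "unpt -` U \<inter> unpt -` V = {}" unfolding vimage_Int[symmetric] \<open>U \<inter> V = {}\<close> by simp
  ultimately show "\<exists>U V. open U \<and> open V \<and> x \<in> U \<and> y \<in> V \<and> U \<inter> V = {}"
    using \<open>unpt x \<in> U\<close> \<open>unpt y \<in> V\<close> by (intro exI[of _ "unpt -` U"] exI[of _ "unpt -` V"]) simp
qed

lemma continuous_on_unpt: "continuous_on S unpt"
proof -
  have "continuous_on UNIV unpt"
    unfolding continuous_on_open_vimage[OF open_UNIV] Int_UNIV_right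
    using open_unpt_vimage by (intro allI impI)
  then show ?thesis by (rule continuous_on_subset) (rule subset_UNIV)
qed

lemma continuous_map_PT:
  assumes f: "continuous_map X euclidean f"
  shows "continuous_map X euclidean (\<lambda>x. PT (f x))"
  unfolding continuous_map_def
proof (intro conjI allI impI)
  show "(\<lambda>x. PT (f x)) \<in> topspace X \<rightarrow> topspace euclidean" by simp
  fix U :: "'b pt set" assume "openin euclidean U"
  then have "open (PT -` U)" by (simp add: open_pt_def)
  then have o: "openin X {x \<in> topspace X. f x \<in> PT -` U}"
    using f unfolding continuous_map_def by (simp only: open_openin)
  have eq: "{x \<in> topspace X. PT (f x) \<in> U} = {x \<in> topspace X. f x \<in> PT -` U}" by auto
  show "openin X {x \<in> topspace X. PT (f x) \<in> U}" unfolding eq by (rule o)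
qed

lemma SW_abstract:
  fixes X :: "'a topology" and A :: "('a \<Rightarrow> real) set"
  assumes K: "compactin X K" and H: "Hausdorff_space X"
    and Acont: "\<And>f. f \<in> A \<Longrightarrow> continuous_map X euclideanreal f"
    and add: "\<And>f g. f \<in> A \<Longrightarrow> g \<in> A \<Longrightarrow> (\<lambda>x. f x + g x) \<in> A"
    and mult: "\<And>f g. f \<in> A \<Longrightarrow> g \<in> A \<Longrightarrow> (\<lambda>x. f x * g x) \<in> A"
    and const: "\<And>c. (\<lambda>x. c) \<in> A"
    and sep: "\<And>x y. x \<in> topspace X \<Longrightarrow> y \<in> topspace X \<Longrightarrow> x \<noteq> y \<Longrightarrow> \<exists>f\<in>A. f x \<noteq> f y"
    and g: "continuous_map X euclideanreal g" and e: "e > 0"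
  shows "\<exists>h\<in>A. \<forall>x\<in>K. \<bar>g x - h x\<bar> < e"
proof -
  define \<Phi> :: "'a \<Rightarrow> ('a \<Rightarrow> real) pt" where "\<Phi> x = PT (\<lambda>f. if f \<in> A then f x else 0)" for x
  define S where "S = \<Phi> ` K"
  have KT: "K \<subseteq> topspace X" using K compactin_subset_topspace by blast
  have Phic: "continuous_map X euclidean \<Phi>"
  proof -
    have "continuous_map X (product_topology (\<lambda>i. euclideanreal) UNIV) (\<lambda>x f. if f \<in> A then f x else 0)"
      unfolding continuous_map_componentwise_UNIV
      using Acont by auto
    then show ?thesis unfolding \<Phi>_def by (intro continuous_map_PT) (simp add: euclidean_product_topology \<Phi>_def)
  qed
  have cS: "compact S"
    using image_compactin[OF K Phic] by (simp add: S_def)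
  have inj: "inj_on \<Phi> K"
  proof (rule inj_onI)
    fix x y assume xy: "x \<in> K" "y \<in> K" "\<Phi> x = \<Phi> y"
    show "x = y"
    proof (rule ccontr)
      assume "x \<noteq> y"
      then obtain f where "f \<in> A" "f x \<noteq> f y" using sep xy KT by blast
      then show False using arg_cong[OF xy(3), of "\<lambda>z. unpt z f"] by (simp add: \<Phi>_def)
    qed
  qed
  have HS: "Hausdorff_space (top_of_set S)"
  proof -
    have "Hausdorff_space (euclidean :: (('a \<Rightarrow> real) pt) topology)"
      unfolding Hausdorff_space_def disjnt_def open_openin[symmetric] by (metis hausdorff)
    then show ?thesis using Hausdorff_space_subtopology by blast
  qed
  have "homeomorphic_map (subtopology X K) (top_of_set S) \<Phi>"
  proof (rule continuous_imp_homeomorphic_map)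
    show "continuous_map (subtopology X K) (top_of_set S) \<Phi>"
    proof -
      have "\<Phi> ` topspace (subtopology X K) \<subseteq> S" using KT by (simp add: S_def Int_absorb1)
      then show ?thesis using continuous_map_from_subtopology[OF Phic]
        by (simp add: continuous_map_in_subtopology image_subset_iff_funcset)
    qed
    show "compact_space (subtopology X K)" using K compact_space_subtopology by blast
    show "\<Phi> ` topspace (subtopology X K) = topspace (top_of_set S)"
      using KT by (simp add: S_def Int_absorb1)
    show "inj_on \<Phi> (topspace (subtopology X K))" using inj KT
      by (simp add: Int_absorb1)
  qed (rule HS)
  then obtain \<Psi> where hm: "homeomorphic_maps (subtopology X K) (top_of_set S) \<Phi> \<Psi>"
    using homeomorphic_map_maps by blast
  then have Psic: "continuous_map (top_of_set S) (subtopology X K) \<Psi>"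
    and PsiPhi: "\<And>x. x \<in> K \<Longrightarrow> \<Psi> (\<Phi> x) = x"
    using KT unfolding homeomorphic_maps_def by (simp_all add: Int_absorb1)
  have Gc: "continuous_on S (g \<circ> \<Psi>)"
  proof -
    have "continuous_map (top_of_set S) euclideanreal (g \<circ> \<Psi>)"
      using continuous_map_compose[OF Psic continuous_map_from_subtopology[OF g]] .
    then show ?thesis by simp
  qed
  define P where "P F \<longleftrightarrow> continuous_on S F \<and> (\<exists>h\<in>A. \<forall>x\<in>K. F (\<Phi> x) = h x)" for F
  have "\<exists>F. P F \<and> (\<forall>y\<in>S. \<bar>(g \<circ> \<Psi>) y - F y\<bar> < e)"
  proof (rule Stone_Weierstrass_HOL[OF cS _ _ _ _ _ Gc e])
    show "P (\<lambda>x. c)" for c unfolding P_def using const by (auto intro!: bexI[of _ "\<lambda>x. c"])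
    show "P f \<Longrightarrow> continuous_on S f" for f unfolding P_def by blast
    show "P (\<lambda>x. f x + g x)" if "P f \<and> P g" for f g
    proof -
      from that obtain hf hg where *: "continuous_on S f" "continuous_on S g" "hf \<in> A" "hg \<in> A"
        "\<forall>x\<in>K. f (\<Phi> x) = hf x" "\<forall>x\<in>K. g (\<Phi> x) = hg x" unfolding P_def by blast
      have c: "continuous_on S (\<lambda>x. f x + g x)" using * by (intro continuous_on_add)
      define hh where "hh = (\<lambda>x. hf x + hg x)"
      have "hh \<in> A" using * add unfolding hh_def by blast
      moreover have "\<forall>x\<in>K. f (\<Phi> x) + g (\<Phi> x) = hh x" using * by (simp add: hh_def)
      ultimately show ?thesis unfolding P_def using c by blast
    qed
    show "P (\<lambda>x. f x * g x)" if "P f \<and> P g" for f g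
    proof -
      from that obtain hf hg where *: "continuous_on S f" "continuous_on S g" "hf \<in> A" "hg \<in> A"
        "\<forall>x\<in>K. f (\<Phi> x) = hf x" "\<forall>x\<in>K. g (\<Phi> x) = hg x" unfolding P_def by blast
      have c: "continuous_on S (\<lambda>x. f x * g x)" using * by (intro continuous_on_mult)
      define hh where "hh = (\<lambda>x. hf x * hg x)"
      have "hh \<in> A" using * mult unfolding hh_def by blast
      moreover have "\<forall>x\<in>K. f (\<Phi> x) * g (\<Phi> x) = hh x" using * by (simp add: hh_def)
      ultimately show ?thesis unfolding P_def using c by blast
    qed
    show "\<exists>f. P f \<and> f x \<noteq> f y" if xy: "x \<in> S \<and> y \<in> S \<and> x \<noteq> y" for x y
    proof -
      obtain a b where ab: "a \<in> K" "b \<in> K" "x = \<Phi> a" "y = \<Phi> b" using xy unfolding S_def by blast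
      then have "a \<noteq> b" using xy by auto
      then obtain f where f: "f \<in> A" "f a \<noteq> f b" using sep ab KT by blast
      have "continuous_on S (\<lambda>z. unpt z f)"
        by (rule continuous_on_compose2[OF continuous_on_product_coordinates continuous_on_unpt]) simp
      moreover have "\<forall>x\<in>K. unpt (\<Phi> x) f = f x" using f(1) by (simp add: \<Phi>_def)
      ultimately have "P (\<lambda>z. unpt z f)" unfolding P_def using f(1) by blast
      moreover have "unpt x f \<noteq> unpt y f" using f ab by (simp add: \<Phi>_def)
      ultimately show ?thesis by blast
    qed
  qed
  then obtain F h where F: "\<forall>y\<in>S. \<bar>(g \<circ> \<Psi>) y - F y\<bar> < e" and h: "h \<in> A" "\<forall>x\<in>K. F (\<Phi> x) = h x"
    unfolding P_def by blast
  show ?thesis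
  proof (intro bexI[OF _ h(1)] ballI)
    fix x assume "x \<in> K"
    then have "\<Phi> x \<in> S" by (simp add: S_def)
    then have "\<bar>(g \<circ> \<Psi>) (\<Phi> x) - F (\<Phi> x)\<bar> < e" using F by blast
    then show "\<bar>g x - h x\<bar> < e" using h(2) PsiPhi[of x] \<open>x \<in> K\<close> by simp
  qed
qed


lemma wnorm_upper:
  assumes "wbounded X \<rho> u" "x \<in> topspace X"
  shows "\<bar>u x\<bar> / \<rho> x \<le> wnorm X \<rho> u"
  unfolding wnorm_def
  by (rule cSup_upper) (use assms in \<open>auto simp: wbounded_def\<close>)

lemma wnorm_least:
  assumes "0 \<le> B" "\<And>x. x \<in> topspace X \<Longrightarrow> \<bar>u x\<bar> / \<rho> x \<le> B"
  shows "wnorm X \<rho> u \<le> B"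
  unfolding wnorm_def
  by (rule cSup_least) (use assms in auto)

lemma wbounded_intro:
  assumes "\<And>x. x \<in> topspace X \<Longrightarrow> \<bar>u x\<bar> / \<rho> x \<le> B"
  shows "wbounded X \<rho> u"
  unfolding wbounded_def bdd_above_def using assms by blast

lemma rho_lower:
  assumes "weighted_space X \<rho>"
  shows "\<exists>c>0. \<forall>x\<in>topspace X. c \<le> \<rho> x"
proof (rule ccontr)
  assume neg: "\<not> ?thesis"
  have H: "Hausdorff_space X" and pos: "\<And>x. x \<in> topspace X \<Longrightarrow> \<rho> x > 0"
    and cpt: "\<And>R. R \<ge> 0 \<Longrightarrow> compactin X {x \<in> topspace X. \<rho> x \<le> R}"
    using assms unfolding weighted_space_def admissible_weight_def by auto
  define C where "C n = {x \<in> topspace X. \<rho> x \<le> 1 / real (Suc n)}" for n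
  have ne: "C n \<noteq> {}" for n
  proof -
    have "\<not> (\<forall>x\<in>topspace X. 1 / real (Suc n) \<le> \<rho> x)"
      using neg by (metis of_nat_0_less_iff zero_less_Suc zero_less_divide_1_iff)
    then show ?thesis unfolding C_def by force
  qed
  have mono: "C n \<subseteq> C m" if "m \<le> n" for m n
  proof -
    have "1 / real (Suc n) \<le> 1 / real (Suc m)"
      using that by (simp add: frac_le)
    then show ?thesis unfolding C_def by auto
  qed
  have cC: "compactin X (C n)" for n
    unfolding C_def by (rule cpt) simp
  have clC: "closedin X (C n)" for n
    using compactin_imp_closedin[OF H cC] .
  have "C 0 \<inter> \<Inter> (range C) \<noteq> {}"
  proof -
    have "\<forall>\<F>. finite \<F> \<and> \<F> \<subseteq> range C \<longrightarrow> C 0 \<inter> \<Inter>\<F> \<noteq> {}"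
    proof (intro allI impI)
      fix \<F> assume F: "finite \<F> \<and> \<F> \<subseteq> range C"
      then obtain N where N: "finite N" "\<F> = C ` N"
        by (meson finite_subset_image)
      define m where "m = Max (insert 0 N)"
      have "n \<le> m" if "n \<in> insert 0 N" for n
        unfolding m_def using N(1) that by simp
      then have "C m \<subseteq> C 0 \<inter> \<Inter>\<F>" using mono N(2) by blast
      then show "C 0 \<inter> \<Inter>\<F> \<noteq> {}" using ne[of m] by blast
    qed
    moreover have "\<forall>C'\<in>range C. closedin X C'" using clC by blast
    ultimately show ?thesis
      using cC[of 0] unfolding compactin_fip by blast
  qed
  then obtain x where x: "x \<in> C 0" "\<And>n. x \<in> C n" by blast
  then have xT: "x \<in> topspace X" unfolding C_def by blast
  obtain n where n: "inverse (real (Suc n)) < \<rho> x"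
    using reals_Archimedean[OF pos[OF xT]] by blast
  have "\<rho> x \<le> 1 / real (Suc n)" using x(2)[of n] unfolding C_def by blast
  then show False using n by (simp add: inverse_eq_divide)
qed


lemma clamp_lip:
  fixes M s t :: real
  assumes "\<bar>s\<bar> \<le> M"
  shows "\<bar>max (-M) (min M t) - s\<bar> \<le> \<bar>t - s\<bar>"
  using assms unfolding max_def min_def by (smt (verit))

lemma clamp_bound:
  fixes M t :: real
  assumes "0 \<le> M"
  shows "\<bar>max (-M) (min M t)\<bar> \<le> M"
  using assms by (auto simp: abs_if max_def min_def)

theorem mainTheorem3:
  fixes X :: "'a topology" and \<rho> :: "'a \<Rightarrow> real" and A :: "('a \<Rightarrow> real) set"
  assumes "weighted_space X \<rho>"
    and "A \<subseteq> Cb X"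
    and "\<And>f g. f \<in> A \<Longrightarrow> g \<in> A \<Longrightarrow> (\<lambda>x. f x + g x) \<in> A"
    and "\<And>f c. f \<in> A \<Longrightarrow> (\<lambda>x. c * f x) \<in> A"
    and "\<And>f g. f \<in> A \<Longrightarrow> g \<in> A \<Longrightarrow> (\<lambda>x. f x * g x) \<in> A"
    and "(\<lambda>x. 1) \<in> A"
    and "\<And>x y. x \<in> topspace X \<Longrightarrow> y \<in> topspace X \<Longrightarrow> x \<noteq> y \<Longrightarrow> \<exists>f\<in>A. f x \<noteq> f y"
  shows "\<forall>f\<in>B_rho X \<rho>. \<forall>\<epsilon>>0. \<exists>g\<in>A.
           wbounded X \<rho> (\<lambda>x. f x - g x) \<and> wnorm X \<rho> (\<lambda>x. f x - g x) < \<epsilon>"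
proof (intro ballI allI impI)
  fix f \<epsilon> assume fB: "f \<in> B_rho X \<rho>" and e: "(\<epsilon>::real) > 0"
  note WS = assms(1)
  have H: "Hausdorff_space X" and pos: "\<And>x. x \<in> topspace X \<Longrightarrow> \<rho> x > 0"
    and cpt: "\<And>R. R \<ge> 0 \<Longrightarrow> compactin X {x \<in> topspace X. \<rho> x \<le> R}"
    using WS unfolding weighted_space_def admissible_weight_def by auto
  have const: "(\<lambda>x. c) \<in> A" for c
    using assms(4)[OF assms(6), of c] by simp
  have Acont: "continuous_map X euclideanreal h" if "h \<in> A" for h
    using assms(2) that unfolding Cb_def by blast
  obtain c where c: "c > 0" "\<And>x. x \<in> topspace X \<Longrightarrow> c \<le> \<rho> x"
    using rho_lower[OF WS] by blast
  obtain g where g: "g \<in> Cb X" "wbounded X \<rho> (\<lambda>x. f x - g x)" "wnorm X \<rho> (\<lambda>x. f x - g x) < \<epsilon>/2"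
  proof -
    have "\<epsilon>/2 > 0" using e by simp
    moreover have "\<forall>\<epsilon>>0. \<exists>g\<in>Cb X. wbounded X \<rho> (\<lambda>x. f x - g x) \<and> wnorm X \<rho> (\<lambda>x. f x - g x) < \<epsilon>"
      using fB unfolding B_rho_def by blast
    ultimately show ?thesis using that by blast
  qed
  have gc: "continuous_map X euclideanreal g" using g(1) unfolding Cb_def by blast
  obtain M where M: "M > 0" "\<And>x. x \<in> topspace X \<Longrightarrow> \<bar>g x\<bar> \<le> M"
    using g(1) unfolding Cb_def bounded_pos by auto
  define \<delta> where "\<delta> = min 1 (\<epsilon> * c / 8)"
  have \<delta>: "\<delta> > 0" "\<delta> \<le> 1" "\<delta> \<le> \<epsilon> * c / 8" using e c unfolding \<delta>_def by auto
  define R where "R = 8 * (M + 1) / \<epsilon>"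
  have R: "R > 0" using M e unfolding R_def by simp
  define K where "K = {x \<in> topspace X. \<rho> x \<le> R}"
  have cK: "compactin X K" unfolding K_def using cpt R by simp
  obtain h where h: "h \<in> A" "\<And>x. x \<in> K \<Longrightarrow> \<bar>g x - h x\<bar> < \<delta>"
    using SW_abstract[OF cK H Acont assms(3) assms(5) const assms(7) gc \<delta>(1)] by blast
  obtain N where N: "N > 0" "\<And>x. x \<in> topspace X \<Longrightarrow> \<bar>h x\<bar> \<le> N"
    using assms(2) h(1) unfolding Cb_def bounded_pos by auto
  define \<psi> where "\<psi> t = max (-M) (min M t)" for t :: real
  have \<psi>c: "continuous_on {-N..N} \<psi>" unfolding \<psi>_def by (intro continuous_intros)
  define Q where "Q q \<longleftrightarrow> continuous_on UNIV q \<and> (\<forall>k\<in>A. (\<lambda>x. q (k x)) \<in> A)" for q :: "real \<Rightarrow> real"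
  have "\<exists>q. Q q \<and> (\<forall>t\<in>{-N..N}. \<bar>\<psi> t - q t\<bar> < \<delta>)"
  proof (rule Stone_Weierstrass_HOL[OF compact_Icc _ _ _ _ _ \<psi>c \<delta>(1)])
    show "Q (\<lambda>x. a)" for a unfolding Q_def using const by simp
    show "Q q \<Longrightarrow> continuous_on {-N..N} q" for q
      unfolding Q_def by (blast intro: continuous_on_subset)
    show "Q (\<lambda>x. p x + q x)" if "Q p \<and> Q q" for p q
      using that unfolding Q_def by (auto intro!: continuous_intros assms(3))
    show "Q (\<lambda>x. p x * q x)" if "Q p \<and> Q q" for p q
      using that unfolding Q_def by (auto intro!: continuous_intros assms(5))
    show "\<exists>q. Q q \<and> q x \<noteq> q y" if "x \<in> {-N..N} \<and> y \<in> {-N..N} \<and> x \<noteq> y" for x y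
    proof -
      have "Q (\<lambda>t. t)" unfolding Q_def by simp
      then show ?thesis using that by blast
    qed
  qed
  then obtain q where q: "Q q" "\<And>t. t \<in> {-N..N} \<Longrightarrow> \<bar>\<psi> t - q t\<bar> < \<delta>" by blast
  define k where "k = (\<lambda>x. q (h x))"
  have kA: "k \<in> A" using q(1) h(1) unfolding Q_def k_def by blast
  have pt: "\<bar>g x - k x\<bar> / \<rho> x \<le> \<epsilon> / 4" if x: "x \<in> topspace X" for x
  proof -
    have rx: "\<rho> x > 0" "c \<le> \<rho> x" using pos[OF x] c(2)[OF x] by auto
    have hx: "h x \<in> {-N..N}" using N(2)[OF x] by auto
    have q1: "\<bar>\<psi> (h x) - k x\<bar> < \<delta>" using q(2)[OF hx] unfolding k_def .
    show ?thesis
    proof (cases "\<rho> x \<le> R")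
      case True
      then have "x \<in> K" using x unfolding K_def by blast
      then have "\<bar>g x - h x\<bar> < \<delta>" using h(2) by blast
      moreover have "\<bar>\<psi> (h x) - g x\<bar> \<le> \<bar>h x - g x\<bar>"
        unfolding \<psi>_def by (rule clamp_lip[OF M(2)[OF x]])
      ultimately have "\<bar>g x - k x\<bar> \<le> 2 * \<delta>" using q1 by linarith
      also have "\<dots> \<le> \<epsilon> / 4 * c" using \<delta>(3) by simp
      also have "\<dots> \<le> \<epsilon> / 4 * \<rho> x" using rx e by (intro mult_left_mono) auto
      finally show ?thesis using rx by (simp add: divide_le_eq)
    next
      case False
      have "\<bar>\<psi> (h x)\<bar> \<le> M" unfolding \<psi>_def by (rule clamp_bound) (use M in simp)
      then have "\<bar>g x - k x\<bar> \<le> 2 * (M + 1)" using q1 M(2)[OF x] \<delta>(2) by (smt (verit))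
      also have "\<dots> = \<epsilon> / 4 * R" unfolding R_def using e by simp
      also have "\<dots> \<le> \<epsilon> / 4 * \<rho> x" using False e by (intro mult_left_mono) auto
      finally show ?thesis using rx by (simp add: divide_le_eq)
    qed
  qed
  have wg: "wbounded X \<rho> (\<lambda>x. g x - k x)" using pt by (rule wbounded_intro)
  have ng: "wnorm X \<rho> (\<lambda>x. g x - k x) \<le> \<epsilon> / 4" using pt e by (intro wnorm_least) auto
  have tri: "\<bar>f x - k x\<bar> / \<rho> x \<le> wnorm X \<rho> (\<lambda>x. f x - g x) + \<epsilon> / 4" if x: "x \<in> topspace X" for x
  proof -
    have rx: "\<rho> x > 0" using pos[OF x] .
    have "\<bar>f x - k x\<bar> / \<rho> x \<le> \<bar>f x - g x\<bar> / \<rho> x + \<bar>g x - k x\<bar> / \<rho> x"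
      using rx by (simp add: add_divide_distrib[symmetric] divide_right_mono abs_triangle_ineq[of "f x - g x" "g x - k x", simplified])
    also have "\<dots> \<le> wnorm X \<rho> (\<lambda>x. f x - g x) + \<epsilon> / 4"
      using wnorm_upper[OF g(2) x] pt[OF x] by (rule add_mono)
    finally show ?thesis .
  qed
  show "\<exists>g\<in>A. wbounded X \<rho> (\<lambda>x. f x - g x) \<and> wnorm X \<rho> (\<lambda>x. f x - g x) < \<epsilon>"
  proof (intro bexI[OF _ kA] conjI)
    show "wbounded X \<rho> (\<lambda>x. f x - k x)" using tri by (rule wbounded_intro)
    have "wnorm X \<rho> (\<lambda>x. f x - k x) \<le> wnorm X \<rho> (\<lambda>x. f x - g x) + \<epsilon> / 4"
    proof (rule wnorm_least)
      show "0 \<le> wnorm X \<rho> (\<lambda>x. f x - g x) + \<epsilon> / 4"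
      proof -
        have "0 \<le> wnorm X \<rho> (\<lambda>x. f x - g x)" unfolding wnorm_def
          by (rule cSup_upper) (use g(2) in \<open>auto simp: wbounded_def\<close>)
        then show ?thesis using e by simp
      qed
    qed (rule tri)
    then show "wnorm X \<rho> (\<lambda>x. f x - k x) < \<epsilon>" using g(3) e by linarith
  qed
qed

end
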